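(* Let $n$ be a power of 2 and $A\subseteq\{0,1\}^{\log n}$ arbitrary. For every $\epsilon>0$, $P_A=\{x\in\{0,1\}^n:\exists y\in A,\ x=h(y)\}$ has a classical nonadaptive property tester with distance parameter $\epsilon$ and one-sided error making $O(1/\epsilon+\log n)$ queries.
   Context: Logarithms are base 2; positions $i$ are identified with vectors in $\mathbb{F}_2^{\log n}$ and $h(y)_i=y\cdot i$ over $\mathbb{F}_2$ (Hadamard code). $x$ is $\epsilon$-far from $P$ if it differs from every element of $P$ in more than $\epsilon n$ positions. A classical property tester with distance parameter $\epsilon$ accepts every $x\in P$ with probability $\ge 2/3$ and every $\epsilon$-far $x$ with probability $\le 1/3$; one-sided error means elements of $P$ are accepted with probability $1$; nonadaptive means the query positions are chosen independently of previous answers. *)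

theory Defs
  imports "HOL-Probability.Probability_Mass_Function"
begin

(* Positions i < 2^k are identified with bit vectors in F_2^k via their binary digits;
   y in {0,1}^k is likewise encoded as a natural number y < 2^k.
   h(y)_i = y . i over F_2. *)
definition hadamard :: "nat \<Rightarrow> nat \<Rightarrow> nat \<Rightarrow> bool" where
  "hadamard k y i = odd (card {j. j < k \<and> bit y j \<and> bit i j})"

(* P_A = { x in {0,1}^n : exists y in A, x = h(y) },  n = 2^k; strings are functions
   nat => bool of which only positions < n matter *)
definition PA :: "nat \<Rightarrow> nat set \<Rightarrow> (nat \<Rightarrow> bool) set" where
  "PA k A = {x. \<exists>y\<in>A. \<forall>i<2^k. x i = hadamard k y i}"

definition eps_far :: "nat \<Rightarrow> real \<Rightarrow> (nat \<Rightarrow> bool) set \<Rightarrow> (nat \<Rightarrow> bool) \<Rightarrow> bool" where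
  "eps_far n \<epsilon> P x \<longleftrightarrow> (\<forall>z\<in>P. real (card {i. i < n \<and> x i \<noteq> z i}) > \<epsilon> * real n)"

(* A nonadaptive randomized tester: a probability distribution over pairs
   (list of query positions, decision on the answers). The query positions are chosen
   before any answer is seen, so the tester is nonadaptive. *)
type_synonym na_tester = "(nat list \<times> (bool list \<Rightarrow> bool)) pmf"

definition accept_prob :: "na_tester \<Rightarrow> (nat \<Rightarrow> bool) \<Rightarrow> real" where
  "accept_prob T x = measure_pmf.prob T {(qs, d). d (map x qs)}"

definition one_sided_na_tester ::
  "nat \<Rightarrow> real \<Rightarrow> (nat \<Rightarrow> bool) set \<Rightarrow> real \<Rightarrow> na_tester \<Rightarrow> bool" where
  "one_sided_na_tester n \<epsilon> P q T \<longleftrightarrow>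
     (\<forall>(qs, d) \<in> set_pmf T. real (length qs) \<le> q \<and> set qs \<subseteq> {..<n}) \<and>
     (\<forall>x\<in>P. accept_prob T x = 1) \<and>
     (\<forall>x. eps_far n \<epsilon> P x \<longrightarrow> accept_prob T x \<le> 1/3)"

end

theory Submission
  imports Defs
begin

definition Ydec :: "bool list \<Rightarrow> nat" where
  "Ydec bs = horner_sum of_bool 2 bs"

definition dec :: "nat \<Rightarrow> nat set \<Rightarrow> nat list \<Rightarrow> bool list \<Rightarrow> bool" where
  "dec k A rs ans = (Ydec (take k ans) \<in> A \<and>
      list_all2 (\<lambda>b r. b = hadamard k (Ydec (take k ans)) r) (drop k ans) rs)"

definition qsof :: "nat \<Rightarrow> nat list \<Rightarrow> nat list" where
  "qsof k rs = map (\<lambda>j. 2^j) [0..<k] @ rs"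

definition Lset :: "nat \<Rightarrow> nat \<Rightarrow> nat list set" where
  "Lset n m = {rs. set rs \<subseteq> {..<n} \<and> length rs = m}"

definition Tst :: "nat \<Rightarrow> nat set \<Rightarrow> nat \<Rightarrow> na_tester" where
  "Tst k A m = map_pmf (\<lambda>rs. (qsof k rs, dec k A rs)) (pmf_of_set (Lset (2^k) m))"

lemma Lset_fin: "finite (Lset n m)"
  unfolding Lset_def by (rule finite_lists_length_eq) auto

lemma Lset_ne: "n > 0 \<Longrightarrow> Lset n m \<noteq> {}"
  unfolding Lset_def by (auto intro!: exI[of _ "replicate m 0"])

lemma Lset_card: "card (Lset n m) = n ^ m"
  unfolding Lset_def using card_lists_length_eq[of "{..<n}" m] by simp

lemma hadamard_pow: "j < k \<Longrightarrow> hadamard k y (2^j) = bit y j"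
proof -
  assume j: "j < k"
  have "{j'. j' < k \<and> bit y j' \<and> bit ((2::nat)^j) j'} = (if bit y j then {j} else {})"
    using j by (auto simp: bit_exp_iff)
  then show ?thesis unfolding hadamard_def by simp
qed

lemma list_all2_map_self:
  "list_all2 (\<lambda>b r. b = f r) (map x rs) rs = (\<forall>r\<in>set rs. x r = f r)"
  by (induction rs) auto

lemma accept_iff:
  "dec k A rs (map x (qsof k rs)) =
    (Ydec (map (\<lambda>j. x (2^j)) [0..<k]) \<in> A \<and>
     (\<forall>r\<in>set rs. x r = hadamard k (Ydec (map (\<lambda>j. x (2^j)) [0..<k])) r))"
  unfolding dec_def qsof_def by (simp add: list_all2_map_self comp_def)

lemma accept_prob_Tst:
  "accept_prob (Tst k A m) x =
     card (Lset (2^k) m \<inter> {rs. dec k A rs (map x (qsof k rs))}) / card (Lset (2^k) m)"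
proof -
  have "accept_prob (Tst k A m) x =
     measure (measure_pmf (pmf_of_set (Lset (2^k) m))) {rs. dec k A rs (map x (qsof k rs))}"
    unfolding accept_prob_def Tst_def by (simp add: vimage_def)
  also have "\<dots> = card (Lset (2^k) m \<inter> {rs. dec k A rs (map x (qsof k rs))}) / card (Lset (2^k) m)"
    by (rule measure_pmf_of_set) (auto simp: Lset_fin Lset_ne)
  finally show ?thesis .
qed

lemma decode_h:
  assumes "y < 2^k" "\<forall>i<2^k. x i = hadamard k y i"
  shows "Ydec (map (\<lambda>j. x (2^j)) [0..<k]) = y"
proof -
  have "map (\<lambda>j. x (2^j)) [0..<k] = map (bit y) [0..<k]"
    using assms(2) by (auto simp: hadamard_pow)
  then show ?thesis unfolding Ydec_def
    using assms(1) by (simp only: horner_sum_bit_eq_take_bit take_bit_nat_eq_self)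
qed

lemma exp_bound:
  fixes e :: real and m :: nat
  assumes "0 < e" "e < 1" "real m \<ge> 2 / e"
  shows "(1 - e) ^ m \<le> 1/3"
proof -
  have "(1 - e) ^ m \<le> exp (-e) ^ m"
    using assms by (intro power_mono) (auto simp: exp_ge_add_one_self[of "-e", simplified])
  also have "\<dots> = exp (- (e * m))" by (simp add: exp_of_nat_mult[symmetric] mult.commute)
  also have "\<dots> \<le> exp (-2)"
  proof -
    have "e * m \<ge> 2" using assms by (simp add: field_simps)
    then show ?thesis by simp
  qed
  also have "exp (-2::real) \<le> 1/3"
  proof -
    have "exp (1::real) \<ge> 2" using exp_ge_add_one_self[of 1] by simp
    then have "exp (1::real) * exp 1 \<ge> 2 * 2" by (intro mult_mono) auto
    then have "exp (2::real) \<ge> 3" by (simp add: exp_add[symmetric])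
    then show ?thesis by (simp add: exp_minus field_simps)
  qed
  finally show ?thesis .
qed

theorem mainTheorem4:
  shows "\<exists>C>0. \<forall>(k::nat) (A::nat set) (\<epsilon>::real).
           A \<subseteq> {..<2^k} \<longrightarrow> \<epsilon> > 0 \<longrightarrow>
           (\<exists>T. one_sided_na_tester (2^k) \<epsilon> (PA k A) (C * (1/\<epsilon> + real k)) T)"
proof (intro exI[of _ 3] conjI allI impI)
  fix k :: nat and A :: "nat set" and e :: real
  assume A: "A \<subseteq> {..<2^k}" and e: "e > 0"
  define m where "m = (if e \<ge> 1 then 0 else nat \<lceil>2/e\<rceil>)"
  let ?n = "(2::nat)^k"
  let ?Y = "\<lambda>x::nat\<Rightarrow>bool. Ydec (map (\<lambda>j. x (2^j)) [0..<k])"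
  have m_ub: "real m \<le> 3 / e"
  proof (cases "e \<ge> 1")
    case True then show ?thesis using e by (simp add: m_def)
  next
    case False
    have "real (nat \<lceil>2/e\<rceil>) = of_int \<lceil>2/e\<rceil>" using e by simp
    then have "real m \<le> 2/e + 1" unfolding m_def using False of_int_ceiling_le_add_one[of "2/e"] by simp
    also have "\<dots> \<le> 3/e" using False e by (simp add: field_simps)
    finally show ?thesis .
  qed
  have m_lb: "e < 1 \<Longrightarrow> real m \<ge> 2/e" unfolding m_def by simp linarith
  have cardpos: "card (Lset ?n m) > 0" by (simp add: Lset_card)
  have "one_sided_na_tester ?n e (PA k A) (3 * (1/e + real k)) (Tst k A m)"
    unfolding one_sided_na_tester_def
  proof (intro conjI ballI allI impI)
    fix p assume "p \<in> set_pmf (Tst k A m)"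
    then have "p \<in> (\<lambda>rs. (qsof k rs, dec k A rs)) ` Lset ?n m"
      unfolding Tst_def set_map_pmf using set_pmf_of_set[OF Lset_ne Lset_fin] by simp
    then obtain rs where rs: "rs \<in> Lset ?n m" and p: "p = (qsof k rs, dec k A rs)"
      by blast
    have len: "length (qsof k rs) = k + m" using rs by (simp add: qsof_def Lset_def)
    have "real (k + m) \<le> 3 * (1/e + real k)" using m_ub e
      by (simp add: field_simps) (smt (verit) mult_nonneg_nonneg of_nat_0_le_iff)
    moreover have "set (qsof k rs) \<subseteq> {..<?n}" using rs by (auto simp: qsof_def Lset_def)
    ultimately show "case p of (qs, d) \<Rightarrow> real (length qs) \<le> 3 * (1/e + real k) \<and> set qs \<subseteq> {..<?n}"
      using p len by simp
  next
    fix x assume "x \<in> PA k A"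
    then obtain y where y: "y \<in> A" and xy: "\<forall>i<?n. x i = hadamard k y i" unfolding PA_def by auto
    have Yx: "?Y x = y" using decode_h[OF _ xy] y A by auto
    have "Lset ?n m \<inter> {rs. dec k A rs (map x (qsof k rs))} = Lset ?n m"
      using y xy by (auto simp: accept_iff Yx Lset_def)
    then show "accept_prob (Tst k A m) x = 1" using cardpos by (simp add: accept_prob_Tst)
  next
    fix x assume far: "eps_far ?n e (PA k A) x"
    show "accept_prob (Tst k A m) x \<le> 1/3"
    proof (cases "?Y x \<in> A")
      case False
      then have "Lset ?n m \<inter> {rs. dec k A rs (map x (qsof k rs))} = {}"
        by (auto simp: accept_iff)
      then show ?thesis by (simp add: accept_prob_Tst)
    next
      case True
      define y where "y = ?Y x"
      define D where "D = {i. i < ?n \<and> x i \<noteq> hadamard k y i}"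
      have "(\<lambda>i. hadamard k y i) \<in> PA k A" using True unfolding PA_def y_def by auto
      then have Dc: "real (card D) > e * real ?n" using far unfolding eps_far_def D_def by auto
      have Dsub: "D \<subseteq> {..<?n}" unfolding D_def by auto
      then have "card D \<le> ?n" using card_mono[of "{..<?n}" D] by simp
      then have "real (card D) \<le> real ?n" by linarith
      moreover have "real ?n > 0" by simp
      ultimately have e1: "e < 1" using Dc
        by (smt (verit) mult_le_cancel_right1)
      have eq: "Lset ?n m \<inter> {rs. dec k A rs (map x (qsof k rs))} = Lset (?n) m \<inter> {rs. set rs \<subseteq> {..<?n} - D}"
        unfolding accept_iff y_def[symmetric] Lset_def D_def using True y_def by auto
      have "Lset ?n m \<inter> {rs. set rs \<subseteq> {..<?n} - D} = {xs. set xs \<subseteq> {..<?n} - D \<and> length xs = m}"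
        unfolding Lset_def by blast
      then have "card (Lset ?n m \<inter> {rs. set rs \<subseteq> {..<?n} - D}) = card ({..<?n} - D) ^ m"
        using card_lists_length_eq[of "{..<?n} - D" m] by simp
      also have "card ({..<?n} - D) = ?n - card D" using Dsub by (simp add: card_Diff_subset finite_subset)
      finally have c1: "card (Lset ?n m \<inter> {rs. set rs \<subseteq> {..<?n} - D}) = (?n - card D) ^ m" .
      have "accept_prob (Tst k A m) x = real ((?n - card D) ^ m) / real (?n ^ m)"
        by (simp add: accept_prob_Tst eq c1 Lset_card)
      also have "\<dots> = ((real ?n - real (card D)) / real ?n) ^ m"
        using \<open>card D \<le> ?n\<close> by (simp add: power_divide of_nat_diff)
      also have "\<dots> \<le> (1 - e) ^ m"
      proof (rule power_mono)
        have "(real ?n - real (card D)) / real ?n = 1 - real (card D) / real ?n" by (simp add: field_simps)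
        moreover have "real (card D) / real ?n > e" using Dc by (simp add: field_simps)
        ultimately show "(real ?n - real (card D)) / real ?n \<le> 1 - e" by linarith
        show "0 \<le> (real ?n - real (card D)) / real ?n" using \<open>card D \<le> ?n\<close> by simp
      qed
      also have "\<dots> \<le> 1/3" using exp_bound[OF e e1 m_lb[OF e1]] .
      finally show ?thesis .
    qed
  qed
  then show "\<exists>T. one_sided_na_tester ?n e (PA k A) (3 * (1/e + real k)) T" by blast
qed simp

end
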